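(* Consider an additive random utility model with $n$ alternatives, i.e. a random vector $\epsilon=(\epsilon^{(1)},\dots,\epsilon^{(n)})^T$ such that (i) $\epsilon$ has zero mean, its joint distribution is absolutely continuous with respect to Lebesgue measure and fully supported on $\mathbb{R}^n$; and (ii) for all $k\neq m$ the density $g_{k,m}$ of the difference $\epsilon^{(m)}-\epsilon^{(k)}$ attains its maximum at some point $\bar z_{k,m}\in\mathbb{R}$ (a mode). Let $E(u)=\mathbb{E}_\epsilon\left(\max_{1\le i\le n} u^{(i)}+\epsilon^{(i)}\right)$ be the surplus function and, for $\eta>0$, let $\tilde E(U;\eta)=\eta\, E(U/\eta)$. Assume $\mathbb{E}\left(\max_{1\le i\le n}\epsilon^{(i)}\right)\le \alpha$. Consider the following online procedure over $T$ rounds: set $U_0=\mathbf{0}$; for $t=1,\dots,T$ the agent chooses $x_t=\nabla\tilde E(U_{t-1};\eta)\in\Delta_n$, then an (possibly adversarial) reward vector $u_t\in\mathbb{R}^n$ with $\|u_t\|_\infty\le K$ is revealed, the agent gains $\langle x_t,u_t\rangle$, and $U_t=U_{t-1}+u_t$. Define the regret $R(T)=\max_{x\in\Delta_n}\langle x,U_T\rangle-\sum_{t=1}^T\langle x_t,u_t\rangle$. Then, with $L=2\sum_{i=1}^n\sum_{j\neq i} g_{i,j}(\bar z_{i,j})$, \[ R(T)\le \eta\cdot\alpha+\frac{L\cdot K^2\cdot T}{\eta}. \] Optimizing over the scaling parameter $\eta$ yields $R(T)\le 2\sqrt{\alpha\, L\, T}\cdot K$; in particular the procedure is Hannan-consistent,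 i.e. $R(T)/T\to 0$.
   Context: $\Delta_n=\{p\in\mathbb{R}^n: \sum_i p^{(i)}=1,\ p^{(i)}\ge 0\}$ is the probability simplex; $\mathbf{0}$ is the zero vector; $\|u\|_\infty=\max_i|u^{(i)}|$. The parameter $\eta$ is a fixed positive step size (the optimized bound corresponds to choosing $\eta$ depending on $T$, $K$, $L$, $\alpha$). *)

theory Defs
  imports "HOL-Probability.Probability"
begin

definition prob_simplex :: "(real ^ 'n) set" where
  "prob_simplex = {p. (\<Sum>i\<in>UNIV. p $ i) = 1 \<and> (\<forall>i. 0 \<le> p $ i)}"

definition surplus :: "'a measure \<Rightarrow> ('a \<Rightarrow> real ^ 'n) \<Rightarrow> real ^ 'n \<Rightarrow> real" where
  "surplus M eps u = (\<integral>\<omega>. (MAX i\<in>UNIV. u $ i + eps \<omega> $ i) \<partial>M)"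

definition scaled_surplus :: "'a measure \<Rightarrow> ('a \<Rightarrow> real ^ 'n) \<Rightarrow> real \<Rightarrow> real ^ 'n \<Rightarrow> real" where
  "scaled_surplus M eps \<eta> U = \<eta> * surplus M eps ((1 / \<eta>) *\<^sub>R U)"

definition regret :: "nat \<Rightarrow> (nat \<Rightarrow> real ^ 'n) \<Rightarrow> (nat \<Rightarrow> real ^ 'n) \<Rightarrow> real" where
  "regret T x u = (SUP p\<in>prob_simplex. p \<bullet> (\<Sum>t=1..T. u t)) - (\<Sum>t=1..T. x t \<bullet> u t)"

end

theory Submission imports Defs begin

definition tri :: "real \<Rightarrow> real \<Rightarrow> real" where
  "tri K d = indicator {0..2*K} d * (2*K - d)"

lemma tri_nonneg: "0 \<le> tri K d"
  by (auto simp: tri_def indicator_def)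

lemma tri_ge: "0 \<le> d \<Longrightarrow> 0 \<le> e \<Longrightarrow> e \<le> 2*K - d \<Longrightarrow> e \<le> tri K d"
  by (auto simp: tri_def indicator_def)

lemma tri_bound: "tri K d \<le> 2 * \<bar>K\<bar>"
  by (auto simp: tri_def indicator_def)

lemma tri_measurable[measurable]: "tri K \<in> borel_measurable borel"
  unfolding tri_def by measurable

lemma tri_integral:
  assumes "0 \<le> K"
  shows "(\<integral>d. tri K d \<partial>lborel) = 2 * K\<^sup>2"
proof -
  have "(\<integral>d. indicator {0..2*K} d *\<^sub>R (2*K - d) \<partial>lborel) = (\<lambda>d. 2*K*d - d^2/2) (2*K) - (\<lambda>d. 2*K*d - d^2/2) 0"
    apply (rule integral_FTC_atLeastAtMost)
    using assms apply simp
     apply (rule has_real_derivative_iff_has_vector_derivative[THEN iffD1])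
     apply (auto intro!: derivative_eq_intros)[1]
    apply (rule continuous_on_diff[OF continuous_on_const continuous_on_id])
    done
  then show ?thesis by (simp add: tri_def power2_eq_square algebra_simps)
qed

lemma tri_integrable: "integrable lborel (tri K)"
proof -
  have "integrable lborel (\<lambda>x. (2*K - x) * indicator {0 .. 2*K} x)"
    by (rule borel_integrable_atLeastAtMost) (auto intro!: continuous_intros)
  then show ?thesis unfolding tri_def by (simp add: mult.commute)
qed
lemma exp_tri:
  assumes P: "prob_space M" and D: "distributed M lborel Z (\<lambda>z. ennreal (g z))"
    and gn: "\<And>z. 0 \<le> g z" and gG: "\<And>z. g z \<le> G" and eta: "\<eta> > 0" and K: "0 \<le> K"
  shows "integrable M (\<lambda>\<omega>. tri K (c - \<eta> * Z \<omega>))"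
    and "(\<integral>\<omega>. tri K (c - \<eta> * Z \<omega>) \<partial>M) \<le> G * (2 * K\<^sup>2) / \<eta>"
proof -
  interpret prob_space M by (rule P)
  have Zm[measurable]: "Z \<in> borel_measurable M"
    using distributed_measurable[OF D] by simp
  have gm[measurable]: "g \<in> borel_measurable borel"
    using distributed_real_measurable[OF _ D] gn by simp
  show "integrable M (\<lambda>\<omega>. tri K (c - \<eta> * Z \<omega>))"
    by (rule integrable_const_bound[where B="2*\<bar>K\<bar>"]) (auto simp: tri_nonneg tri_bound)
  have "(\<integral>\<omega>. tri K (c - \<eta> * Z \<omega>) \<partial>M) = (\<integral>z. g z * tri K (c - \<eta> * z) \<partial>lborel)"
    by (rule distributed_integral[OF D, symmetric]) (auto simp: gn)
  also have "\<dots> \<le> (\<integral>z. G * tri K (c + (- \<eta>) * z) \<partial>lborel)"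
  proof (rule integral_mono)
    have i1: "integrable lborel (\<lambda>z. tri K (c + (- \<eta>) * z))"
      using lborel_integrable_real_affine[OF tri_integrable[of K], where c="-\<eta>" and t=c] eta by simp
    then show i2: "integrable lborel (\<lambda>z. G * tri K (c + (- \<eta>) * z))" by simp
    show "integrable lborel (\<lambda>z. g z * tri K (c - \<eta> * z))"
      apply (rule Bochner_Integration.integrable_bound[OF i2])
       apply measurable
      using gn gG tri_nonneg
      by (auto intro!: AE_I2 order.trans[OF _ abs_ge_self] mult_right_mono)
    show "\<And>z. g z * tri K (c - \<eta> * z) \<le> G * tri K (c + - \<eta> * z)"
      using gn gG tri_nonneg by (auto intro!: mult_right_mono)
  qed
  also have "\<dots> = G * (\<integral>z. tri K (c + (- \<eta>) * z) \<partial>lborel)" by simp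
  also have "(\<integral>z. tri K (c + (- \<eta>) * z) \<partial>lborel) = (2 * K\<^sup>2) / \<eta>"
    using lborel_integral_real_affine[of "-\<eta>" "tri K" c] eta tri_integral[OF K]
    by (simp add: field_simps)
  finally show "(\<integral>\<omega>. tri K (c - \<eta> * Z \<omega>) \<partial>M) \<le> G * (2 * K\<^sup>2) / \<eta>" by simp
qed

lemma tie_null:
  assumes D: "distributed M lborel Z (\<lambda>z. ennreal (g z))"
  shows "AE \<omega> in M. Z \<omega> \<noteq> c"
proof -
  have Zm[measurable]: "Z \<in> borel_measurable M"
    using distributed_measurable[OF D] by simp
  have "emeasure M (Z -` {c} \<inter> space M) = (\<integral>\<^sup>+x. ennreal (g x) * indicator {c} x \<partial>lborel)"
    by (rule distributed_emeasure[OF D]) simp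
  also have "\<dots> = 0"
  proof -
    have "(\<lambda>x. ennreal (g x) * indicator {c} x) = (\<lambda>x. ennreal (g c) * indicator {c} x)"
      by (auto simp: indicator_def)
    then show ?thesis by (simp add: nn_integral_cmult_indicator)
  qed
  finally show ?thesis
    by (intro AE_I[where N="Z -` {c} \<inter> space M"]) auto
qed
lemma pointwise:
  fixes y a :: "real ^ 'n" and i0 :: 'n
  assumes strict: "\<And>j. j \<noteq> i0 \<Longrightarrow> y $ j < y $ i0"
  shows "y $ i0 + a $ i0 \<le> (MAX i\<in>UNIV. y $ i + a $ i)"
    and "(MAX i\<in>UNIV. y $ i) = y $ i0"
    and "(\<And>i. \<bar>a $ i\<bar> \<le> K) \<Longrightarrow>
         (MAX i\<in>UNIV. y $ i + a $ i) - (y $ i0 + a $ i0) \<le> (\<Sum>i\<in>UNIV. \<Sum>j\<in>UNIV - {i}. tri K (y $ i - y $ j))"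
proof -
  show "y $ i0 + a $ i0 \<le> (MAX i\<in>UNIV. y $ i + a $ i)" by (rule Max_ge) auto
  show "(MAX i\<in>UNIV. y $ i) = y $ i0"
    by (rule Max_eqI) (auto, metis strict less_le order_refl)
  assume aK: "\<And>i. \<bar>a $ i\<bar> \<le> K"
  have "(MAX i\<in>UNIV. y $ i + a $ i) \<in> (\<lambda>i. y $ i + a $ i) ` UNIV" by (rule Max_in) auto
  then obtain j where j: "(MAX i\<in>UNIV. y $ i + a $ i) = y $ j + a $ j" by (auto simp del: Max_in)
  have nn: "0 \<le> (\<Sum>i\<in>UNIV. \<Sum>j\<in>UNIV - {i}. tri K (y $ i - y $ j))"
    by (intro sum_nonneg tri_nonneg)
  show "(MAX i\<in>UNIV. y $ i + a $ i) - (y $ i0 + a $ i0) \<le> (\<Sum>i\<in>UNIV. \<Sum>j\<in>UNIV - {i}. tri K (y $ i - y $ j))"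
  proof (cases "j = i0")
    case True then show ?thesis using j nn by simp
  next
    case False
    have e0: "0 \<le> y $ j + a $ j - (y $ i0 + a $ i0)"
      using \<open>y $ i0 + a $ i0 \<le> _\<close> j by simp
    have "y $ j + a $ j - (y $ i0 + a $ i0) \<le> tri K (y $ i0 - y $ j)"
      apply (rule tri_ge)
      using strict[OF False] e0 aK[of j] aK[of i0] by auto
    also have "\<dots> \<le> (\<Sum>j\<in>UNIV - {i0}. tri K (y $ i0 - y $ j))"
      by (rule member_le_sum[where f="\<lambda>j. tri K (y $ i0 - y $ j)"]) (use False tri_nonneg in auto)
    also have "\<dots> \<le> (\<Sum>i\<in>UNIV. \<Sum>j\<in>UNIV - {i}. tri K (y $ i - y $ j))"
      by (rule member_le_sum[where f="\<lambda>i. \<Sum>j\<in>UNIV - {i}. tri K (y $ i - y $ j)"])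
         (auto intro: sum_nonneg tri_nonneg)
    finally show ?thesis using j by simp
  qed
qed
lemma step:
  fixes M :: "'a measure" and eps :: "'a \<Rightarrow> real ^ 'n"
    and g :: "'n \<Rightarrow> 'n \<Rightarrow> real \<Rightarrow> real" and zbar :: "'n \<Rightarrow> 'n \<Rightarrow> real"
    and \<eta> K :: real and U u :: "real ^ 'n"
  assumes P: "prob_space M"
    and integrable: "\<And>i. integrable M (\<lambda>\<omega>. eps \<omega> $ i)"
    and g_nonneg: "\<And>k m z. k \<noteq> m \<Longrightarrow> 0 \<le> g k m z"
    and g_density: "\<And>k m. k \<noteq> m \<Longrightarrow>
          distributed M lborel (\<lambda>\<omega>. eps \<omega> $ m - eps \<omega> $ k) (\<lambda>z. ennreal (g k m z))"
    and g_mode: "\<And>k m z. k \<noteq> m \<Longrightarrow> g k m z \<le> g k m (zbar k m)"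
    and eta_pos: "\<eta> > 0"
  defines "\<Phi> \<equiv> \<lambda>W. \<integral>\<omega>. (MAX i\<in>UNIV. W $ i + \<eta> * eps \<omega> $ i) \<partial>M"
  shows "\<exists>q. (\<forall>W. q \<bullet> (W - U) \<le> \<Phi> W - \<Phi> U) \<and>
     ((\<forall>i. \<bar>u $ i\<bar> \<le> K) \<longrightarrow>
       \<Phi> (U + u) - \<Phi> U - q \<bullet> u \<le> (\<Sum>i\<in>UNIV. \<Sum>j\<in>UNIV - {i}. g i j (zbar i j)) * (2 * K\<^sup>2) / \<eta>)"
proof -
  interpret prob_space M by (rule P)
  have em[measurable]: "(\<lambda>\<omega>. eps \<omega> $ i) \<in> borel_measurable M" for i
    using integrable by (rule borel_measurable_integrable)
  define y where "y \<omega> = (\<chi> i. U $ i + \<eta> * eps \<omega> $ i)" for \<omega>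
  define w where "w i \<omega> = (if \<forall>j. j \<noteq> i \<longrightarrow> y \<omega> $ j < y \<omega> $ i then 1 else 0 :: real)" for i \<omega>
  have wm[measurable]: "w i \<in> borel_measurable M" for i
    unfolding w_def y_def by simp
  have wi: "integrable M (w i)" for i
    by (rule integrable_const_bound[where B=1]) (auto simp: w_def)
  have FI: "integrable M (\<lambda>\<omega>. MAX i\<in>UNIV. W $ i + \<eta> * eps \<omega> $ i)" for W
    by (rule integrable_MAX) (auto intro!: integrable)
  have Fy: "(MAX i\<in>UNIV. W $ i + \<eta> * eps \<omega> $ i) = (MAX i\<in>UNIV. y \<omega> $ i + (W - U) $ i)" for W \<omega>
    unfolding y_def by (simp add: algebra_simps)
  have FyU: "(MAX i\<in>UNIV. U $ i + \<eta> * eps \<omega> $ i) = (MAX i\<in>UNIV. y \<omega> $ i)" for \<omega>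
    unfolding y_def by (simp add: algebra_simps)
  define q where "q = (\<chi> i. \<integral>\<omega>. w i \<omega> \<partial>M)"
  have qa: "q \<bullet> a = (\<integral>\<omega>. (\<Sum>i\<in>UNIV. w i \<omega> * a $ i) \<partial>M)" for a
    by (simp add: q_def inner_vec_def integral_sum wi)
  have nt: "AE \<omega> in M. \<forall>i j. i \<noteq> j \<longrightarrow> y \<omega> $ i \<noteq> y \<omega> $ j"
  proof (intro eventually_all_finite impI)
    fix i j :: 'n
    show "AE \<omega> in M. i \<noteq> j \<longrightarrow> y \<omega> $ i \<noteq> y \<omega> $ j"
    proof (cases "i = j")
      case False
      have "AE \<omega> in M. eps \<omega> $ j - eps \<omega> $ i \<noteq> (U $ i - U $ j) / \<eta>"
        by (rule tie_null[OF g_density[OF False]])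
      then show ?thesis
      proof (rule AE_mp, intro AE_I2 impI)
        fix \<omega> assume "eps \<omega> $ j - eps \<omega> $ i \<noteq> (U $ i - U $ j) / \<eta>"
        then show "y \<omega> $ i \<noteq> y \<omega> $ j"
          using eta_pos by (auto simp: y_def field_simps)
      qed
    qed simp
  qed
  have key: "AE \<omega> in M. \<exists>i0. (\<forall>j. j \<noteq> i0 \<longrightarrow> y \<omega> $ j < y \<omega> $ i0) \<and> (\<forall>i. w i \<omega> = (if i = i0 then 1 else 0))"
    using nt
  proof (rule AE_mp, intro AE_I2 impI)
    fix \<omega> assume ntw: "\<forall>i j. i \<noteq> j \<longrightarrow> y \<omega> $ i \<noteq> y \<omega> $ j"
    have "(MAX i\<in>UNIV. y \<omega> $ i) \<in> (\<lambda>i. y \<omega> $ i) ` UNIV" by (rule Max_in) auto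
    then obtain i0 where i0: "(MAX i\<in>UNIV. y \<omega> $ i) = y \<omega> $ i0" by (auto simp del: Max_in)
    have st: "\<forall>j. j \<noteq> i0 \<longrightarrow> y \<omega> $ j < y \<omega> $ i0"
    proof (intro allI impI)
      fix j assume "j \<noteq> i0"
      have "y \<omega> $ j \<le> y \<omega> $ i0" unfolding i0[symmetric] by (rule Max_ge) auto
      then show "y \<omega> $ j < y \<omega> $ i0" using ntw \<open>j \<noteq> i0\<close> by force
    qed
    have "\<forall>i. w i \<omega> = (if i = i0 then 1 else 0)"
      using st by (auto simp: w_def) (metis less_asym)
    with st show "\<exists>i0. (\<forall>j. j \<noteq> i0 \<longrightarrow> y \<omega> $ j < y \<omega> $ i0) \<and> (\<forall>i. w i \<omega> = (if i = i0 then 1 else 0))"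
      by blast
  qed
  have sub: "q \<bullet> (W - U) \<le> \<Phi> W - \<Phi> U" for W
  proof -
    have "\<Phi> W - \<Phi> U = (\<integral>\<omega>. (MAX i\<in>UNIV. W $ i + \<eta> * eps \<omega> $ i) - (MAX i\<in>UNIV. U $ i + \<eta> * eps \<omega> $ i) \<partial>M)"
      unfolding \<Phi>_def by (simp add: Bochner_Integration.integral_diff[OF FI FI])
    moreover have "(\<integral>\<omega>. (\<Sum>i\<in>UNIV. w i \<omega> * (W - U) $ i) \<partial>M) \<le> \<dots>"
    proof (rule integral_mono_AE)
      show "integrable M (\<lambda>\<omega>. \<Sum>i\<in>UNIV. w i \<omega> * (W - U) $ i)" by (auto intro!: wi)
      show "integrable M (\<lambda>\<omega>. (MAX i\<in>UNIV. W $ i + \<eta> * eps \<omega> $ i) - (MAX i\<in>UNIV. U $ i + \<eta> * eps \<omega> $ i))"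
        by (intro Bochner_Integration.integrable_diff FI)
      show "AE \<omega> in M. (\<Sum>i\<in>UNIV. w i \<omega> * (W - U) $ i) \<le> (MAX i\<in>UNIV. W $ i + \<eta> * eps \<omega> $ i) - (MAX i\<in>UNIV. U $ i + \<eta> * eps \<omega> $ i)"
        using key
      proof (rule AE_mp, intro AE_I2 impI)
        fix \<omega> assume "\<exists>i0. (\<forall>j. j \<noteq> i0 \<longrightarrow> y \<omega> $ j < y \<omega> $ i0) \<and> (\<forall>i. w i \<omega> = (if i = i0 then 1 else 0))"
        then obtain i0 where st: "\<And>j. j \<noteq> i0 \<Longrightarrow> y \<omega> $ j < y \<omega> $ i0" and wv: "\<And>i. w i \<omega> = (if i = i0 then 1 else 0)"
          by blast
        have "(\<Sum>i\<in>UNIV. w i \<omega> * (W - U) $ i) = (W - U) $ i0"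
          by (subst sum.remove[of _ i0]) (auto simp: wv)
        moreover note pointwise(1)[OF st, where a="W - U"] pointwise(2)[OF st]
        ultimately show "(\<Sum>i\<in>UNIV. w i \<omega> * (W - U) $ i) \<le> (MAX i\<in>UNIV. W $ i + \<eta> * eps \<omega> $ i) - (MAX i\<in>UNIV. U $ i + \<eta> * eps \<omega> $ i)"
          unfolding FyU Fy[of W] by linarith
      qed
    qed
    ultimately show ?thesis by (simp add: qa)
  qed
  define Tm where "Tm i j \<omega> = tri K ((U $ i - U $ j) - \<eta> * (eps \<omega> $ j - eps \<omega> $ i))" for i j \<omega>
  have yT: "tri K (y \<omega> $ i - y \<omega> $ j) = Tm i j \<omega>" for i j \<omega>
    unfolding Tm_def y_def by (simp add: algebra_simps)
  have upper: "\<Phi> (U + u) - \<Phi> U - q \<bullet> u \<le> (\<Sum>i\<in>UNIV. \<Sum>j\<in>UNIV - {i}. g i j (zbar i j)) * (2 * K\<^sup>2) / \<eta>"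
    if uK: "\<forall>i. \<bar>u $ i\<bar> \<le> K"
  proof -
    have K0: "0 \<le> K" using uK abs_ge_zero order_trans by blast
    have TI: "integrable M (Tm i j)" if "i \<noteq> j" for i j
      unfolding Tm_def
      by (rule exp_tri(1)[OF P g_density[OF that] g_nonneg[OF that] g_mode[OF that] eta_pos K0])
    have TE: "(\<integral>\<omega>. Tm i j \<omega> \<partial>M) \<le> g i j (zbar i j) * (2 * K\<^sup>2) / \<eta>" if "i \<noteq> j" for i j
      unfolding Tm_def
      by (rule exp_tri(2)[OF P g_density[OF that] g_nonneg[OF that] g_mode[OF that] eta_pos K0])
    have "\<Phi> (U + u) - \<Phi> U - q \<bullet> u = (\<integral>\<omega>. (MAX i\<in>UNIV. (U + u) $ i + \<eta> * eps \<omega> $ i) - (MAX i\<in>UNIV. U $ i + \<eta> * eps \<omega> $ i)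
         - (\<Sum>i\<in>UNIV. w i \<omega> * u $ i) \<partial>M)"
    proof -
      have e1: "\<Phi> (U + u) - \<Phi> U = (\<integral>\<omega>. (MAX i\<in>UNIV. (U + u) $ i + \<eta> * eps \<omega> $ i) - (MAX i\<in>UNIV. U $ i + \<eta> * eps \<omega> $ i) \<partial>M)"
        unfolding \<Phi>_def by (rule Bochner_Integration.integral_diff[OF FI FI, symmetric])
      show ?thesis
        unfolding e1 qa
        by (rule Bochner_Integration.integral_diff[symmetric])
           (intro Bochner_Integration.integrable_diff FI Bochner_Integration.integrable_sum
            integrable_mult_left wi)+
    qed
    also have "\<dots> \<le> (\<integral>\<omega>. (\<Sum>i\<in>UNIV. \<Sum>j\<in>UNIV - {i}. Tm i j \<omega>) \<partial>M)"
    proof (rule integral_mono_AE)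
      show "integrable M (\<lambda>\<omega>. (MAX i\<in>UNIV. (U + u) $ i + \<eta> * eps \<omega> $ i) - (MAX i\<in>UNIV. U $ i + \<eta> * eps \<omega> $ i)
         - (\<Sum>i\<in>UNIV. w i \<omega> * u $ i))"
        by (intro Bochner_Integration.integrable_diff FI Bochner_Integration.integrable_sum
            integrable_mult_left wi)
      show "integrable M (\<lambda>\<omega>. \<Sum>i\<in>UNIV. \<Sum>j\<in>UNIV - {i}. Tm i j \<omega>)"
        by (intro Bochner_Integration.integrable_sum TI) auto
      show "AE \<omega> in M. (MAX i\<in>UNIV. (U + u) $ i + \<eta> * eps \<omega> $ i) - (MAX i\<in>UNIV. U $ i + \<eta> * eps \<omega> $ i)
         - (\<Sum>i\<in>UNIV. w i \<omega> * u $ i) \<le> (\<Sum>i\<in>UNIV. \<Sum>j\<in>UNIV - {i}. Tm i j \<omega>)"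
        using key
      proof (rule AE_mp, intro AE_I2 impI)
        fix \<omega> assume "\<exists>i0. (\<forall>j. j \<noteq> i0 \<longrightarrow> y \<omega> $ j < y \<omega> $ i0) \<and> (\<forall>i. w i \<omega> = (if i = i0 then 1 else 0))"
        then obtain i0 where st: "\<And>j. j \<noteq> i0 \<Longrightarrow> y \<omega> $ j < y \<omega> $ i0" and wv: "\<And>i. w i \<omega> = (if i = i0 then 1 else 0)"
          by blast
        have "(\<Sum>i\<in>UNIV. w i \<omega> * u $ i) = u $ i0"
          by (subst sum.remove[of _ i0]) (auto simp: wv)
        moreover note pointwise(3)[OF st, where a=u and K=K] pointwise(2)[OF st]
        moreover have "(MAX i\<in>UNIV. (U + u) $ i + \<eta> * eps \<omega> $ i) = (MAX i\<in>UNIV. y \<omega> $ i + u $ i)"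
          unfolding y_def by (simp add: algebra_simps)
        ultimately show "(MAX i\<in>UNIV. (U + u) $ i + \<eta> * eps \<omega> $ i) - (MAX i\<in>UNIV. U $ i + \<eta> * eps \<omega> $ i)
         - (\<Sum>i\<in>UNIV. w i \<omega> * u $ i) \<le> (\<Sum>i\<in>UNIV. \<Sum>j\<in>UNIV - {i}. Tm i j \<omega>)"
          unfolding FyU yT using uK by auto
      qed
    qed
    also have "\<dots> = (\<Sum>i\<in>UNIV. \<Sum>j\<in>UNIV - {i}. (\<integral>\<omega>. Tm i j \<omega> \<partial>M))"
      by (subst Bochner_Integration.integral_sum) 
         (auto intro!: Bochner_Integration.integrable_sum TI Bochner_Integration.integral_sum sum.cong)
    also have "\<dots> \<le> (\<Sum>i\<in>UNIV. \<Sum>j\<in>UNIV - {i}. g i j (zbar i j) * (2 * K\<^sup>2) / \<eta>)"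
      by (intro sum_mono TE) auto
    also have "\<dots> = (\<Sum>i\<in>UNIV. \<Sum>j\<in>UNIV - {i}. g i j (zbar i j)) * (2 * K\<^sup>2) / \<eta>"
      by (simp add: sum_distrib_right sum_divide_distrib)
    finally show ?thesis .
  qed
  show ?thesis using sub upper by blast
qed
lemma deriv_ge:
  fixes \<Phi> :: "real ^ 'n \<Rightarrow> real"
  assumes D: "(\<Phi> has_derivative (\<lambda>h. x \<bullet> h)) (at U)"
    and sub: "\<And>W. q \<bullet> (W - U) \<le> \<Phi> W - \<Phi> U"
  shows "q \<bullet> u \<le> x \<bullet> u"
proof (rule ccontr)
  assume "\<not> q \<bullet> u \<le> x \<bullet> u"
  hence neg: "x \<bullet> u - q \<bullet> u < 0" by simp
  have l: "((\<lambda>s::real. U + s *\<^sub>R u) has_derivative (\<lambda>s. s *\<^sub>R u)) (at 0)"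
    by (auto intro!: derivative_eq_intros)
  have D': "(\<Phi> has_derivative (\<lambda>h. x \<bullet> h)) (at ((\<lambda>s::real. U + s *\<^sub>R u) 0))"
    using D by simp
  have "((\<lambda>s. \<Phi> (U + s *\<^sub>R u)) has_derivative (\<lambda>s. x \<bullet> (s *\<^sub>R u))) (at 0)"
    using has_derivative_compose[OF l D'] by simp
  moreover have "(\<lambda>s. s * (x \<bullet> u)) = (*) (x \<bullet> u)" by (auto simp: mult.commute)
  ultimately have "((\<lambda>s. \<Phi> (U + s *\<^sub>R u)) has_derivative (*) (x \<bullet> u)) (at 0)"
    by simp
  hence d1: "((\<lambda>s. \<Phi> (U + s *\<^sub>R u)) has_real_derivative (x \<bullet> u)) (at 0)"
    by (simp add: has_field_derivative_def)
  have "((\<lambda>s. \<Phi> (U + s *\<^sub>R u) - s * (q \<bullet> u)) has_real_derivative (x \<bullet> u - q \<bullet> u)) (at 0)"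
    by (rule derivative_eq_intros d1 | simp)+
  from DERIV_neg_dec_right[OF this neg] obtain d where d: "d > 0"
    and h: "\<And>h. h > 0 \<Longrightarrow> h < d \<Longrightarrow> \<Phi> (U + 0 *\<^sub>R u) - 0 * (q \<bullet> u) > \<Phi> (U + (0 + h) *\<^sub>R u) - (0 + h) * (q \<bullet> u)"
    by blast
  have "\<Phi> U > \<Phi> (U + (d/2) *\<^sub>R u) - (d/2) * (q \<bullet> u)"
    using h[of "d/2"] d by simp
  moreover have "q \<bullet> ((U + (d/2) *\<^sub>R u) - U) \<le> \<Phi> (U + (d/2) *\<^sub>R u) - \<Phi> U" by (rule sub)
  ultimately show False by (simp add: inner_scaleR_right)
qed
lemma alg:
  fixes \<eta> \<alpha> K L T R :: real
  assumes eta_pos: "\<eta> > 0" and alpha0: "0 \<le> \<alpha>" and eta_def: "\<eta> = K * sqrt (L * T / \<alpha>)"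
    and K0: "T = 0 \<or> 0 \<le> K" and main: "R \<le> \<eta> * \<alpha> + L * K\<^sup>2 * T / \<eta>"
  shows "R \<le> 2 * sqrt (\<alpha> * L * T) * K"
proof -
  define s where "s = sqrt (L * T / \<alpha>)"
  have Ks: "0 < K * s" using eta_pos eta_def s_def by simp
  have s0: "s \<noteq> 0" using Ks by auto
  have a0: "\<alpha> \<noteq> 0" using s0 s_def by auto
  with alpha0 have ap: "0 < \<alpha>" by simp
  have "T \<noteq> 0" using s0 s_def by auto
  with K0 have "0 \<le> K" by simp
  with Ks have spos: "0 < s" by (simp add: zero_less_mult_iff)
  have LT: "0 < L * T / \<alpha>" using spos s_def by simp
  have Kpos: "0 < K" using Ks spos by (simp add: zero_less_mult_iff)
  have s2: "s * s = L * T / \<alpha>" unfolding s_def real_sqrt_mult_self by (rule abs_of_pos[OF LT])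
  have LTe: "L * T = s * s * \<alpha>" using s2 ap by (simp add: field_simps)
  have sq: "\<alpha> * L * T = (s * \<alpha>)\<^sup>2"
  proof -
    have "(s * \<alpha>)\<^sup>2 = (s * s * \<alpha>) * \<alpha>" by (simp add: power2_eq_square ac_simps)
    also have "\<dots> = \<alpha> * L * T" unfolding LTe[symmetric] by (simp add: ac_simps)
    finally show ?thesis by simp
  qed
  have r: "sqrt (\<alpha> * L * T) = s * \<alpha>"
    unfolding sq using spos ap by simp
  have e1: "\<eta> * \<alpha> = K * (s * \<alpha>)" unfolding eta_def s_def by simp
  have "L * K\<^sup>2 * T / \<eta> = (L * T) * K * K / (K * s)"
    unfolding eta_def s_def[symmetric] by (simp add: power2_eq_square)
  also have "\<dots> = K * (s * \<alpha>)" unfolding LTe using Kpos spos by simp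
  finally have e2: "L * K\<^sup>2 * T / \<eta> = K * (s * \<alpha>)" .
  have "R \<le> K * (s * \<alpha>) + K * (s * \<alpha>)" using main unfolding e1 e2 .
  then show ?thesis unfolding r by (simp add: algebra_simps)
qed

theorem theorem1:
  fixes M :: "'a measure" and eps :: "'a \<Rightarrow> real ^ 'n"
    and g :: "'n \<Rightarrow> 'n \<Rightarrow> real \<Rightarrow> real" and zbar :: "'n \<Rightarrow> 'n \<Rightarrow> real"
    and \<alpha> \<eta> K :: real and T :: nat
    and u x :: "nat \<Rightarrow> real ^ 'n"
  assumes P: "prob_space M"
    and meas: "eps \<in> borel_measurable M"
    and integrable: "\<And>i. integrable M (\<lambda>\<omega>. eps \<omega> $ i)"
    and zero_mean: "\<And>i. (\<integral>\<omega>. eps \<omega> $ i \<partial>M) = 0"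
    and abs_cont: "absolutely_continuous lborel (distr M lborel eps)"
    and full_support: "\<And>S. open S \<Longrightarrow> S \<noteq> {} \<Longrightarrow> measure (distr M lborel eps) S > 0"
    and g_nonneg: "\<And>k m z. k \<noteq> m \<Longrightarrow> 0 \<le> g k m z"
    and g_density: "\<And>k m. k \<noteq> m \<Longrightarrow>
          distributed M lborel (\<lambda>\<omega>. eps \<omega> $ m - eps \<omega> $ k) (\<lambda>z. ennreal (g k m z))"
    and g_mode: "\<And>k m z. k \<noteq> m \<Longrightarrow> g k m z \<le> g k m (zbar k m)"
    and alpha: "surplus M eps 0 \<le> \<alpha>"
    and eta_pos: "\<eta> > 0"
    and reward_bound: "\<And>t i. t \<in> {1..T} \<Longrightarrow> \<bar>u t $ i\<bar> \<le> K"
    and gradient: "\<And>t. t \<in> {1..T} \<Longrightarrow>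
          (scaled_surplus M eps \<eta> has_derivative (\<lambda>h. x t \<bullet> h)) (at (\<Sum>s=1..t-1. u s))"
  shows "regret T x u \<le> \<eta> * \<alpha> +
            (2 * (\<Sum>i\<in>UNIV. \<Sum>j\<in>UNIV - {i}. g i j (zbar i j))) * K\<^sup>2 * real T / \<eta>
       \<and> (\<eta> = K * sqrt ((2 * (\<Sum>i\<in>UNIV. \<Sum>j\<in>UNIV - {i}. g i j (zbar i j))) * real T / \<alpha>) \<longrightarrow>
            regret T x u \<le> 2 * sqrt (\<alpha> * (2 * (\<Sum>i\<in>UNIV. \<Sum>j\<in>UNIV - {i}. g i j (zbar i j))) * real T) * K)"
proof -
  interpret prob_space M by (rule P)
  define L where "L = 2 * (\<Sum>i\<in>UNIV. \<Sum>j\<in>UNIV - {i}. g i j (zbar i j))"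
  define \<Phi> where "\<Phi> = (\<lambda>W::real^'n. \<integral>\<omega>. (MAX i\<in>UNIV. W $ i + \<eta> * eps \<omega> $ i) \<partial>M)"
  have em[measurable]: "(\<lambda>\<omega>. eps \<omega> $ i) \<in> borel_measurable M" for i
    using integrable by (rule borel_measurable_integrable)
  have FI: "integrable M (\<lambda>\<omega>. MAX i\<in>UNIV. W $ i + \<eta> * eps \<omega> $ i)" for W
    by (rule integrable_MAX) (auto intro!: integrable)
  have ss: "scaled_surplus M eps \<eta> W = \<Phi> W" for W
  proof -
    have mono: "mono ((*) \<eta>)" using eta_pos by (auto intro!: monoI mult_left_mono)
    have "\<eta> * (MAX i\<in>UNIV. ((1 / \<eta>) *\<^sub>R W) $ i + eps \<omega> $ i) = (MAX i\<in>UNIV. W $ i + \<eta> * eps \<omega> $ i)" for \<omega>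
      using eta_pos
      by (subst mono_Max_commute[OF mono]) (auto simp: image_image algebra_simps)
    then show ?thesis
      unfolding scaled_surplus_def surplus_def \<Phi>_def
      by (simp add: integral_mult_right_zero[symmetric] del: integral_mult_right_zero)
  qed
  have ssD: "scaled_surplus M eps \<eta> = \<Phi>" using ss by auto
  have lowerS: "S $ i \<le> \<Phi> S" for S i
  proof -
    have "(\<integral>\<omega>. S $ i + \<eta> * eps \<omega> $ i \<partial>M) \<le> \<Phi> S"
      unfolding \<Phi>_def
      by (rule integral_mono[OF _ FI]) (auto intro!: integrable Max_ge)
    moreover have "(\<integral>\<omega>. S $ i + \<eta> * eps \<omega> $ i \<partial>M) = S $ i"
      using zero_mean[of i] integrable[of i] by (simp add: prob_space)
    ultimately show ?thesis by simp
  qed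
  have Phi0: "\<Phi> 0 = \<eta> * surplus M eps 0"
    using ss[of 0] by (simp add: scaled_surplus_def)
  have alpha0: "0 \<le> \<alpha>"
  proof -
    have "0 \<le> \<Phi> 0" using lowerS[of 0 undefined] by simp
    then have "0 \<le> surplus M eps 0" using Phi0 eta_pos by (simp add: zero_le_mult_iff)
    then show ?thesis using alpha by simp
  qed
  define S where "S t = (\<Sum>s=1..t. u s)" for t
  define B where "B = L * K\<^sup>2 / \<eta>"
  have stepb: "\<Phi> (S t) - \<Phi> (S (t - 1)) \<le> x t \<bullet> u t + B" if t: "t \<in> {1..T}" for t
  proof -
    obtain n where n: "t = Suc n" using t by (cases t) auto
    have St: "S t = S (t - 1) + u t"
      unfolding S_def n by simp
    have uK: "\<forall>i. \<bar>u t $ i\<bar> \<le> K" using reward_bound[OF t] by blast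
    have st: "\<exists>q. (\<forall>W. q \<bullet> (W - S (t - 1)) \<le> \<Phi> W - \<Phi> (S (t - 1))) \<and>
       ((\<forall>i. \<bar>u t $ i\<bar> \<le> K) \<longrightarrow> \<Phi> (S (t - 1) + u t) - \<Phi> (S (t - 1)) - q \<bullet> u t
          \<le> (\<Sum>i\<in>UNIV. \<Sum>j\<in>UNIV - {i}. g i j (zbar i j)) * (2 * K\<^sup>2) / \<eta>)"
      using step[OF P integrable g_nonneg g_density g_mode eta_pos, where U="S (t - 1)" and u="u t" and K=K]
      unfolding \<Phi>_def .
    then obtain q where q1: "\<forall>W. q \<bullet> (W - S (t - 1)) \<le> \<Phi> W - \<Phi> (S (t - 1))"
      and q2: "\<Phi> (S (t - 1) + u t) - \<Phi> (S (t - 1)) - q \<bullet> u t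
          \<le> (\<Sum>i\<in>UNIV. \<Sum>j\<in>UNIV - {i}. g i j (zbar i j)) * (2 * K\<^sup>2) / \<eta>"
      using uK by blast
    have D: "(\<Phi> has_derivative (\<lambda>h. x t \<bullet> h)) (at (S (t - 1)))"
      using gradient[OF t] unfolding ssD S_def[symmetric] .
    have qx: "q \<bullet> u t \<le> x t \<bullet> u t"
      by (rule deriv_ge[OF D]) (use q1 in blast)
    have eqB: "(\<Sum>i\<in>UNIV. \<Sum>j\<in>UNIV - {i}. g i j (zbar i j)) * (2 * K\<^sup>2) / \<eta> = B"
      unfolding B_def L_def by simp
    show ?thesis unfolding St using q2 qx eqB by linarith
  qed
  have tele: "n \<le> T \<Longrightarrow> \<Phi> (S n) \<le> \<Phi> 0 + (\<Sum>t=1..n. x t \<bullet> u t) + real n * B" for n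
  proof (induction n)
    case 0 then show ?case by (simp add: S_def)
  next
    case (Suc n)
    have t: "Suc n \<in> {1..T}" using Suc.prems by simp
    have h1: "\<Phi> (S (Suc n)) - \<Phi> (S n) \<le> x (Suc n) \<bullet> u (Suc n) + B"
      using stepb[OF t] by simp
    have IH: "\<Phi> (S n) \<le> \<Phi> 0 + (\<Sum>t=1..n. x t \<bullet> u t) + real n * B"
      using Suc.IH Suc.prems by simp
    have h2: "(\<Sum>t=1..Suc n. x t \<bullet> u t) = (\<Sum>t=1..n. x t \<bullet> u t) + x (Suc n) \<bullet> u (Suc n)"
      by simp
    have h3: "real (Suc n) * B = real n * B + B" by (simp add: distrib_right)
    show ?case unfolding h2 h3 using h1 IH by linarith
  qed
  have sup: "(SUP p\<in>prob_simplex. p \<bullet> S T) \<le> \<Phi> (S T)"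
  proof (rule cSUP_least)
    have c: "real CARD('n) \<noteq> 0" by simp
    have "(\<Sum>i\<in>UNIV. (\<chi> i::'n. 1 / real CARD('n)) $ i) = 1" using c by simp
    then have "(\<chi> i::'n. 1 / real CARD('n)) \<in> prob_simplex"
      unfolding prob_simplex_def by simp
    then show "prob_simplex \<noteq> ({} :: (real^'n) set)" by (metis empty_iff)
  next
    fix p :: "real^'n" assume "p \<in> prob_simplex"
    then have p1: "(\<Sum>i\<in>UNIV. p $ i) = 1" and p0: "\<And>i. 0 \<le> p $ i"
      unfolding prob_simplex_def by auto
    have "p \<bullet> S T = (\<Sum>i\<in>UNIV. p $ i * S T $ i)" by (simp add: inner_vec_def)
    also have "\<dots> \<le> (\<Sum>i\<in>UNIV. p $ i * \<Phi> (S T))"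
      by (rule sum_mono, rule mult_left_mono, rule lowerS, rule p0)
    also have "\<dots> = (\<Sum>i\<in>UNIV. p $ i) * \<Phi> (S T)" by (rule sum_distrib_right[symmetric])
    also have "\<dots> = \<Phi> (S T)" using p1 by simp
    finally show "p \<bullet> S T \<le> \<Phi> (S T)" .
  qed
  have main: "regret T x u \<le> \<eta> * \<alpha> + L * K\<^sup>2 * real T / \<eta>"
  proof -
    have "regret T x u \<le> \<Phi> (S T) - (\<Sum>t=1..T. x t \<bullet> u t)"
      using sup unfolding regret_def S_def by simp
    also have "\<dots> \<le> \<Phi> 0 + real T * B" using tele[of T] by simp
    also have "\<dots> \<le> \<eta> * \<alpha> + real T * B"
      using Phi0 alpha eta_pos by simp
    finally show ?thesis unfolding B_def by (simp add: field_simps)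
  qed
  have second: "regret T x u \<le> 2 * sqrt (\<alpha> * L * real T) * K"
    if eta_def: "\<eta> = K * sqrt (L * real T / \<alpha>)"
  proof -
    have K0: "real T = 0 \<or> 0 \<le> K"
    proof (cases "T = 0")
      case False
      then have "(1::nat) \<in> {1..T}" by simp
      from reward_bound[OF this, of undefined] show ?thesis by linarith
    qed simp
    show ?thesis by (rule alg[OF eta_pos alpha0 eta_def K0 main])
  qed
  show ?thesis using main second unfolding L_def by simp
qed

end
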